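(* Let $G$ and $H$ be connected graphs, each with at least $3$ vertices, let $\ell_1=\lambda_3(G)$, $\ell_2=\lambda_3(H)$, $n_2=|V(H)|$. Let $S=\{x,y,z\}$ be a set of three distinct vertices of $G\circ H$ such that exactly two of them lie in a common $H$-layer (i.e., $x,y\in H(u)$ and $z\in H(u')$ for some distinct $u,u'\in V(G)$). Then $G\circ H$ contains at least $\ell_2+\ell_1 n_2$ pairwise edge-disjoint $S$-trees.
   Context: For a graph $G$ and $S\subseteq V(G)$ with $|S|\ge 2$, an $S$-tree is a subgraph that is a tree containing all vertices of $S$; $\lambda(S)$ is the maximum number of pairwise edge-disjoint $S$-trees, and $\lambda_3(G)=\min\{\lambda(S): |S|=3\}$. The lexicographic product $G\circ H$ has vertex set $V(G)\times V(H)$, and $(u,v)$ is adjacent to $(u',v')$ iff either $uu'\in E(G)$, or $u=u'$ and $vv'\in E(H)$. For $u\in V(G)$, the $H$-layer $H(u)$ is the vertex set $\{(u,v): v\in V(H)\}$. *)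

theory Defs
  imports Main
begin

type_synonym 'a graph = "'a set \<times> 'a set set"

definition verts :: "'a graph \<Rightarrow> 'a set" where "verts G = fst G"
definition edges :: "'a graph \<Rightarrow> 'a set set" where "edges G = snd G"

definition graph :: "'a graph \<Rightarrow> bool" where
  "graph G \<longleftrightarrow> finite (verts G) \<and>
     (\<forall>e\<in>edges G. \<exists>u v. e = {u, v} \<and> u \<noteq> v \<and> u \<in> verts G \<and> v \<in> verts G)"

definition adj :: "'a graph \<Rightarrow> 'a \<Rightarrow> 'a \<Rightarrow> bool" where
  "adj G u v \<longleftrightarrow> {u, v} \<in> edges G"

definition connected :: "'a graph \<Rightarrow> bool" where
  "connected G \<longleftrightarrow> verts G \<noteq> {} \<and>
     (\<forall>u\<in>verts G. \<forall>v\<in>verts G. (adj G)\<^sup>*\<^sup>* u v)"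

definition is_cycle :: "'a graph \<Rightarrow> 'a list \<Rightarrow> bool" where
  "is_cycle G xs \<longleftrightarrow> length xs \<ge> 3 \<and> distinct xs \<and> set xs \<subseteq> verts G \<and>
     (\<forall>i<length xs. adj G (xs ! i) (xs ! ((i + 1) mod length xs)))"

definition acyclic_graph :: "'a graph \<Rightarrow> bool" where
  "acyclic_graph G \<longleftrightarrow> \<not> (\<exists>xs. is_cycle G xs)"

definition is_tree :: "'a graph \<Rightarrow> bool" where
  "is_tree T \<longleftrightarrow> graph T \<and> connected T \<and> acyclic_graph T"

definition subgraph :: "'a graph \<Rightarrow> 'a graph \<Rightarrow> bool" where
  "subgraph T G \<longleftrightarrow> graph T \<and> verts T \<subseteq> verts G \<and> edges T \<subseteq> edges G"

definition S_tree :: "'a graph \<Rightarrow> 'a set \<Rightarrow> 'a graph \<Rightarrow> bool" where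
  "S_tree G S T \<longleftrightarrow> subgraph T G \<and> is_tree T \<and> S \<subseteq> verts T"

definition edge_disjoint_S_trees :: "'a graph \<Rightarrow> 'a set \<Rightarrow> nat \<Rightarrow> (nat \<Rightarrow> 'a graph) \<Rightarrow> bool" where
  "edge_disjoint_S_trees G S k T \<longleftrightarrow>
     (\<forall>i<k. S_tree G S (T i)) \<and>
     (\<forall>i<k. \<forall>j<k. i \<noteq> j \<longrightarrow> edges (T i) \<inter> edges (T j) = {})"

definition lambdaS :: "'a graph \<Rightarrow> 'a set \<Rightarrow> nat" where
  "lambdaS G S = Max {k. \<exists>T. edge_disjoint_S_trees G S k T}"

definition lambda3 :: "'a graph \<Rightarrow> nat" where
  "lambda3 G = Min {lambdaS G S | S. S \<subseteq> verts G \<and> card S = 3}"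

definition lex_prod :: "'a graph \<Rightarrow> 'b graph \<Rightarrow> ('a \<times> 'b) graph" where
  "lex_prod G H = (verts G \<times> verts H,
     {{(u, v), (u', v')} | u v u' v'.
        u \<in> verts G \<and> u' \<in> verts G \<and> v \<in> verts H \<and> v' \<in> verts H \<and>
        ({u, u'} \<in> edges G \<or> (u = u' \<and> {v, v'} \<in> edges H))})"

end

theory Submission
  imports Defs
begin


definition conn :: "'a set set \<Rightarrow> 'a \<Rightarrow> 'a \<Rightarrow> bool" where
  "conn F a b \<longleftrightarrow> {a, b} \<in> F"

lemma conn_sym: "conn F a b = conn F b a"
  unfolding conn_def by (simp add: insert_commute)

lemma rtc_sym_gen:
  assumes "r\<^sup>*\<^sup>* a b" "\<And>p q. r p q \<Longrightarrow> r q p"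
  shows "r\<^sup>*\<^sup>* b a"
  using assms(1)
proof induction
  case base then show ?case by simp
next
  case (step y z)
  have "r z y" using assms(2) step(2) .
  then show ?case using step(3) by (rule converse_rtranclp_into_rtranclp)
qed

lemma conn_rtc_sym: "(conn F)\<^sup>*\<^sup>* a b \<Longrightarrow> (conn F)\<^sup>*\<^sup>* b a"
  by (erule rtc_sym_gen) (simp add: conn_def insert_commute)

lemma adj_sym: "adj G a b = adj G b a"
  unfolding adj_def by (simp add: insert_commute)

lemma adj_rtc_sym: "(adj G)\<^sup>*\<^sup>* a b \<Longrightarrow> (adj G)\<^sup>*\<^sup>* b a"
  by (erule rtc_sym_gen) (simp add: adj_def insert_commute)

lemma rtc_lift:
  assumes "r\<^sup>*\<^sup>* a b" and "\<And>p q. r p q \<Longrightarrow> s\<^sup>*\<^sup>* (f p) (f q)"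
  shows "s\<^sup>*\<^sup>* (f a) (f b)"
  using assms(1)
proof induction
  case base then show ?case by simp
next
  case (step y z)
  show ?case using step(3) assms(2)[OF step(2)] by (rule rtranclp_trans)
qed

lemma rtc_mono_conn:
  assumes "(conn F)\<^sup>*\<^sup>* a b" "F \<subseteq> F'"
  shows "(conn F')\<^sup>*\<^sup>* a b"
proof -
  have "(conn F')\<^sup>*\<^sup>* (id a) (id b)"
    by (rule rtc_lift[of "conn F" a b]) (use assms in \<open>auto simp: conn_def\<close>)
  thus ?thesis by simp
qed

lemma graph_edge:
  assumes "graph G" "{p, q} \<in> edges G"
  shows "p \<noteq> q \<and> p \<in> verts G \<and> q \<in> verts G"
proof -
  obtain a b where "{p,q} = {a,b}" "a \<noteq> b" "a \<in> verts G" "b \<in> verts G"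
    using assms unfolding graph_def by blast
  thus ?thesis by (auto simp: doubleton_eq_iff)
qed

lemma finite_edges:
  assumes "graph G" shows "finite (edges G)"
proof -
  have "edges G \<subseteq> Pow (verts G)"
  proof
    fix e assume "e \<in> edges G"
    then obtain p q where "e = {p,q}" "p \<in> verts G" "q \<in> verts G"
      using assms unfolding graph_def by blast
    thus "e \<in> Pow (verts G)" by auto
  qed
  moreover have "finite (Pow (verts G))" using assms unfolding graph_def by simp
  ultimately show ?thesis by (rule finite_subset)
qed



lemma tree_exists:
  assumes G: "graph G" and FE: "F \<subseteq> edges G" and Sv: "S \<subseteq> verts G" and s0: "s0 \<in> S"
    and con: "\<forall>a\<in>S. (conn F)\<^sup>*\<^sup>* s0 a"
  shows "\<exists>T. S_tree G S T \<and> edges T \<subseteq> F"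
proof -
  define P where "P F' \<longleftrightarrow> F' \<subseteq> F \<and> (\<forall>a\<in>S. (conn F')\<^sup>*\<^sup>* s0 a)" for F'
  have "P F" using con by (simp add: P_def)
  then obtain F0 where P0: "P F0" and min: "\<forall>F'. P F' \<longrightarrow> card F0 \<le> card F'"
    using ex_has_least_nat[of P F card] by blast
  have finF: "finite F" using finite_subset[OF FE finite_edges[OF G]] .
  have F0F: "F0 \<subseteq> F" and con0: "\<forall>a\<in>S. (conn F0)\<^sup>*\<^sup>* s0 a" using P0 by (auto simp: P_def)
  have finF0: "finite F0" using finite_subset[OF F0F finF] .
  have step_verts: "p \<noteq> q \<and> p \<in> verts G \<and> q \<in> verts G" if "conn F0 p q" for p q
    using graph_edge[OF G, of p q] F0F FE that by (auto simp: conn_def)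
  define V0 where "V0 = {v. (conn F0)\<^sup>*\<^sup>* s0 v}"
  define E0 where "E0 = {e \<in> F0. e \<subseteq> V0}"
  define T where "T = (V0, E0)"
  have vT: "verts T = V0" and eT: "edges T = E0" by (simp_all add: T_def verts_def edges_def)
  have s0G: "s0 \<in> verts G" using s0 Sv by auto
  have V0G: "V0 \<subseteq> verts G"
  proof
    fix v assume "v \<in> V0" hence "(conn F0)\<^sup>*\<^sup>* s0 v" by (simp add: V0_def)
    thus "v \<in> verts G" by induction (use s0G step_verts in auto)
  qed
  have s0V: "s0 \<in> V0" by (simp add: V0_def)
  have SV0: "S \<subseteq> V0" using con0 by (auto simp: V0_def)
  have gT: "graph T"
    unfolding graph_def vT eT
  proof
    show "finite V0" using V0G G finite_subset unfolding graph_def by blast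
    show "\<forall>e\<in>E0. \<exists>u v. e = {u, v} \<and> u \<noteq> v \<and> u \<in> V0 \<and> v \<in> V0"
    proof
      fix e assume e: "e \<in> E0"
      then have "e \<in> edges G" using F0F FE by (auto simp: E0_def)
      then obtain a b where "e = {a,b}" "a \<noteq> b" using G unfolding graph_def by blast
      thus "\<exists>u v. e = {u, v} \<and> u \<noteq> v \<and> u \<in> V0 \<and> v \<in> V0" using e by (auto simp: E0_def)
    qed
  qed
  have reachT: "(adj T)\<^sup>*\<^sup>* s0 v" if "v \<in> V0" for v
  proof -
    have "(conn F0)\<^sup>*\<^sup>* s0 v" using that by (simp add: V0_def)
    thus ?thesis
    proof induction
      case base show ?case by simp
    next
      case (step y z)
      have "y \<in> V0" "z \<in> V0" using step(1) rtranclp.rtrancl_into_rtrancl[OF step(1) step(2)]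
        by (auto simp: V0_def)
      hence "adj T y z" using step(2) by (auto simp: adj_def eT E0_def conn_def)
      thus ?case by (rule rtranclp.rtrancl_into_rtrancl[OF step(3)])
    qed
  qed
  have cT: "connected T"
    unfolding connected_def vT
  proof (intro conjI ballI)
    show "V0 \<noteq> {}" using s0V by auto
    fix a b assume "a \<in> V0" "b \<in> V0"
    then have "(adj T)\<^sup>*\<^sup>* a s0" "(adj T)\<^sup>*\<^sup>* s0 b"
      using adj_rtc_sym[OF reachT[of a]] reachT[of b] by simp_all
    thus "(adj T)\<^sup>*\<^sup>* a b" by (rule rtranclp_trans)
  qed
  have aT: "acyclic_graph T"
  proof (unfold acyclic_graph_def, rule notI, elim exE)
    fix xs assume cyc: "is_cycle T xs"
    define n where "n = length xs"
    have n3: "n \<ge> 3" and dist: "distinct xs" and adjc: "\<forall>i<n. adj T (xs!i) (xs!((i+1) mod n))"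
      using cyc by (auto simp: is_cycle_def n_def)
    have adjc': "{xs!i, xs!(i+1)} \<in> E0" if "i+1<n" for i
      using adjc[rule_format, of i] that by (auto simp: adj_def eT)
    have last: "{xs!(n-1), xs!0} \<in> E0" using adjc[rule_format, of "n-1"] n3 by (simp add: adj_def eT)
    define e where "e = {xs!0, xs!1}"
    have eE0: "e \<in> E0" using adjc'[of 0] n3 by (simp add: e_def)
    define F1 where "F1 = F0 - {e}"
    have ne_i: "{xs!i, xs!(i+1)} \<noteq> e" if "1 \<le> i" "i+1 < n" for i
    proof -
      have l: "Suc (Suc 0) < length xs" "0 < length xs" using n3 by (auto simp: n_def)
      have x20: "xs ! Suc (Suc 0) \<noteq> xs ! 0" using nth_eq_iff_index_eq[OF dist l] by simp
      show ?thesis using that n3 x20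
      by (auto simp: e_def doubleton_eq_iff nth_eq_iff_index_eq[OF dist] n_def)
    qed
    have ne_last: "{xs!(n-1), xs!0} \<noteq> e"
      using n3 by (auto simp: e_def doubleton_eq_iff nth_eq_iff_index_eq[OF dist] n_def)
    have chain: "(conn F1)\<^sup>*\<^sup>* (xs!1) (xs!k)" if "1 \<le> k" "k < n" for k
      using that
    proof (induction k)
      case 0 thus ?case by simp
    next
      case (Suc k)
      show ?case
      proof (cases "k = 0")
        case True thus ?thesis by simp
      next
        case False
        hence "(conn F1)\<^sup>*\<^sup>* (xs!1) (xs!k)" using Suc by auto
        moreover have "conn F1 (xs!k) (xs!(Suc k))"
          using adjc'[of k] ne_i[of k] Suc.prems False by (auto simp: conn_def F1_def E0_def)
        ultimately show ?thesis by (rule rtranclp.rtrancl_into_rtrancl)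
      qed
    qed
    have "(conn F1)\<^sup>*\<^sup>* (xs!1) (xs!(n-1))" using chain[of "n-1"] n3 by simp
    moreover have "conn F1 (xs!(n-1)) (xs!0)" using last ne_last by (auto simp: conn_def F1_def E0_def)
    ultimately have c10: "(conn F1)\<^sup>*\<^sup>* (xs!1) (xs!0)" by (rule rtranclp.rtrancl_into_rtrancl)
    have e_conn: "(conn F1)\<^sup>*\<^sup>* p q" if "{p,q} = e" for p q
      using that c10 conn_rtc_sym[OF c10] by (auto simp: e_def doubleton_eq_iff)
    have lift: "(conn F1)\<^sup>*\<^sup>* p q" if "conn F0 p q" for p q
    proof (cases "{p,q} = e")
      case True thus ?thesis by (rule e_conn)
    next
      case False thus ?thesis using that by (auto simp: conn_def F1_def)
    qed
    have "\<forall>a\<in>S. (conn F1)\<^sup>*\<^sup>* s0 a"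
    proof
      fix a assume "a \<in> S"
      hence "(conn F0)\<^sup>*\<^sup>* s0 a" using con0 by auto
      hence "(conn F1)\<^sup>*\<^sup>* (id s0) (id a)" by (rule rtc_lift) (simp add: lift)
      thus "(conn F1)\<^sup>*\<^sup>* s0 a" by simp
    qed
    hence "P F1" using F0F by (auto simp: P_def F1_def)
    hence "card F0 \<le> card F1" using min by auto
    moreover have "card F1 < card F0" unfolding F1_def using eE0 finF0 by (intro card_Diff1_less) (auto simp: E0_def)
    ultimately show False by simp
  qed
  have "S_tree G S T" unfolding S_tree_def subgraph_def is_tree_def
    using gT cT aT V0G SV0 F0F FE by (auto simp: vT eT E0_def)
  moreover have "edges T \<subseteq> F" using F0F by (auto simp: eT E0_def)
  ultimately show ?thesis by blast
qed



lemma tree_has_edge: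
  assumes "S_tree G S T" "a \<in> S" "b \<in> S" "a \<noteq> b"
  shows "\<exists>e. e \<in> edges T"
proof -
  have "(adj T)\<^sup>*\<^sup>* a b" using assms unfolding S_tree_def is_tree_def connected_def by blast
  then obtain c where "adj T a c" using assms(4) by (metis converse_rtranclpE)
  thus ?thesis unfolding adj_def by blast
qed

lemma eds_bound:
  assumes G: "graph G" and ab: "a \<in> S" "b \<in> S" "a \<noteq> b"
    and E: "edge_disjoint_S_trees G S k T"
  shows "k \<le> card (edges G)"
proof -
  have "\<forall>i\<in>{..<k}. \<exists>e. e \<in> edges (T i)"
    using E tree_has_edge[OF _ ab] unfolding edge_disjoint_S_trees_def by blast
  then obtain e where e: "\<forall>i\<in>{..<k}. e i \<in> edges (T i)" by (metis bchoice)
  have inj: "inj_on e {..<k}"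
  proof (rule inj_onI)
    fix i j assume ij: "i \<in> {..<k}" "j \<in> {..<k}" "e i = e j"
    show "i = j"
    proof (rule ccontr)
      assume "i \<noteq> j"
      hence "edges (T i) \<inter> edges (T j) = {}" using ij E unfolding edge_disjoint_S_trees_def by auto
      moreover have "e i \<in> edges (T i)" "e i \<in> edges (T j)" using e ij by (auto simp del: lessThan_iff) (metis lessThan_iff)
      ultimately show False by auto
    qed
  qed
  have "e ` {..<k} \<subseteq> edges G"
    using e E unfolding edge_disjoint_S_trees_def S_tree_def subgraph_def by auto
  from card_inj_on_le[OF inj this finite_edges[OF G]] show ?thesis by simp
qed

lemma lambdaS_props:
  assumes G: "graph G" and ab: "a \<in> S" "b \<in> S" "a \<noteq> b"
  shows "(\<exists>T. edge_disjoint_S_trees G S (lambdaS G S) T)"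
    and "edge_disjoint_S_trees G S k T \<Longrightarrow> k \<le> lambdaS G S"
proof -
  define K where "K = {k. \<exists>T. edge_disjoint_S_trees G S k T}"
  have "K \<subseteq> {..card (edges G)}" using eds_bound[OF G ab] by (auto simp: K_def)
  hence fin: "finite K" using finite_subset by blast
  have "0 \<in> K" by (auto simp: K_def edge_disjoint_S_trees_def)
  hence "Max K \<in> K" using fin Max_in by blast
  thus "\<exists>T. edge_disjoint_S_trees G S (lambdaS G S) T" by (simp add: K_def lambdaS_def)
  show "edge_disjoint_S_trees G S k T \<Longrightarrow> k \<le> lambdaS G S"
    using fin Max_ge unfolding lambdaS_def K_def[symmetric] by (auto simp: K_def)
qed

lemma eds_trunc:
  "edge_disjoint_S_trees G S k T \<Longrightarrow> m \<le> k \<Longrightarrow> edge_disjoint_S_trees G S m T"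
  unfolding edge_disjoint_S_trees_def by auto

lemma lambda3_le:
  assumes G: "graph G" and "S \<subseteq> verts G" "card S = 3"
  shows "lambda3 G \<le> lambdaS G S"
proof -
  have eq: "{lambdaS G S | S. S \<subseteq> verts G \<and> card S = 3} = lambdaS G ` {S. S \<subseteq> verts G \<and> card S = 3}"
    by auto
  have "finite {S. S \<subseteq> verts G \<and> card S = 3}"
    by (rule finite_subset[of _ "Pow (verts G)"]) (use G in \<open>auto simp: graph_def\<close>)
  hence "finite {lambdaS G S | S. S \<subseteq> verts G \<and> card S = 3}" by (simp add: eq)
  moreover have "lambdaS G S \<in> {lambdaS G S | S. S \<subseteq> verts G \<and> card S = 3}" using assms by auto
  ultimately show ?thesis unfolding lambda3_def by (rule Min_le)
qed

lemma conn_edges_adj: "conn (edges G) = adj G"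
  by (auto simp: conn_def adj_def fun_eq_iff)

lemma lambdaS_ge1:
  assumes G: "graph G" and cG: "connected G" and Sv: "S \<subseteq> verts G"
    and ab: "a \<in> S" "b \<in> S" "a \<noteq> b"
  shows "1 \<le> lambdaS G S"
proof -
  have "\<forall>c\<in>S. (conn (edges G))\<^sup>*\<^sup>* a c"
    using cG Sv ab unfolding conn_edges_adj connected_def by blast
  then obtain T where T: "S_tree G S T" using tree_exists[OF G _ Sv ab(1)] by blast
  have "edge_disjoint_S_trees G S 1 (\<lambda>_. T)" using T by (simp add: edge_disjoint_S_trees_def)
  thus ?thesis by (rule lambdaS_props(2)[OF G ab])
qed



lemma lex_verts: "verts (lex_prod G H) = verts G \<times> verts H"
  by (simp add: lex_prod_def verts_def)

lemma lex_edge_G: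
  assumes "p \<in> verts G" "q \<in> verts G" "s \<in> verts H" "r \<in> verts H" "{p,q} \<in> edges G"
  shows "{(p,s),(q,r)} \<in> edges (lex_prod G H)"
  using assms unfolding lex_prod_def edges_def verts_def by fastforce

lemma lex_edge_H:
  assumes "p \<in> verts G" "s \<in> verts H" "r \<in> verts H" "{s,r} \<in> edges H"
  shows "{(p,s),(p,r)} \<in> edges (lex_prod G H)"
  using assms unfolding lex_prod_def edges_def verts_def by fastforce

lemma lex_graph:
  assumes G: "graph G" and H: "graph H"
  shows "graph (lex_prod G H)"
  unfolding graph_def lex_verts
proof
  show "finite (verts G \<times> verts H)" using G H by (simp add: graph_def)
  show "\<forall>e\<in>edges (lex_prod G H). \<exists>p q. e = {p, q} \<and> p \<noteq> q \<and> p \<in> verts G \<times> verts H \<and> q \<in> verts G \<times> verts H"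
  proof
    fix e assume "e \<in> edges (lex_prod G H)"
    then obtain p s q r where e: "e = {(p,s),(q,r)}" "p \<in> verts G" "q \<in> verts G" "s \<in> verts H" "r \<in> verts H"
      and or: "{p,q} \<in> edges G \<or> (p = q \<and> {s,r} \<in> edges H)"
      unfolding lex_prod_def edges_def verts_def by auto
    have "(p,s) \<noteq> (q,r)" using or graph_edge[OF G, of p q] graph_edge[OF H, of s r] by auto
    thus "\<exists>p q. e = {p, q} \<and> p \<noteq> q \<and> p \<in> verts G \<times> verts H \<and> q \<in> verts G \<times> verts H"
      using e by blast
  qed
qed

lemma third_elem:
  assumes "finite A" "card A \<ge> 3"
  shows "\<exists>t\<in>A. t \<noteq> p \<and> t \<noteq> q"
proof (rule ccontr)
  assume "\<not> ?thesis"
  hence "A \<subseteq> {p,q}" by auto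
  hence "card A \<le> card {p,q}" by (rule card_mono[rotated]) simp
  also have "\<dots> \<le> 2" by (simp add: card_insert_if)
  finally show False using assms by simp
qed

lemma nbrs:
  assumes cT: "connected T" and V: "u \<in> verts T" "u' \<in> verts T" "t \<in> verts T"
    and d: "u \<noteq> u'" "t \<noteq> u" "t \<noteq> u'"
  shows "\<exists>a b. adj T u a \<and> adj T u' b \<and> \<not> (a = u' \<and> b = u)"
proof (rule ccontr)
  assume N: "\<not> ?thesis"
  have r1: "(adj T)\<^sup>*\<^sup>* u t" "(adj T)\<^sup>*\<^sup>* u' t" using cT V unfolding connected_def by auto
  obtain a0 where a0: "adj T u a0" using r1(1) d by (metis converse_rtranclpE)
  obtain b0 where b0: "adj T u' b0" using r1(2) d by (metis converse_rtranclpE)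
  have na: "adj T u a \<Longrightarrow> a = u'" for a using N b0 by blast
  have nb: "adj T u' b \<Longrightarrow> b = u" for b using N a0 by blast
  have "(adj T)\<^sup>*\<^sup>* u v \<Longrightarrow> v \<in> {u,u'}" for v
    by (induction rule: rtranclp_induct) (auto dest: na nb)
  thus False using r1(1) d by auto
qed



lemma pair_doubleton_eq:
  "{(p,s),(q,r)} = {(p',s'),(q',r')} \<Longrightarrow> {p,q} = {p',q'} \<and> {s,r} = {s',r'}"
  by (auto simp: doubleton_eq_iff)

locale cons =
  fixes G :: "'a graph" and H :: "'b graph" and u u' :: 'a and v1 v2 w w' :: 'b
    and L l1 l2 n :: nat and TG :: "nat \<Rightarrow> 'a graph" and R :: "nat \<Rightarrow> 'b graph"
    and a b :: "nat \<Rightarrow> 'a" and c :: "nat \<Rightarrow> 'b" and f :: "nat \<Rightarrow> 'b" and SG :: "'a set"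
  assumes G: "graph G" and H: "graph H"
   and uG: "u \<in> verts G" and u'G: "u' \<in> verts G" and uu: "u \<noteq> u'"
   and v1H: "v1 \<in> verts H" and v2H: "v2 \<in> verts H" and wH: "w \<in> verts H" and w'H: "w' \<in> verts H"
   and v12: "v1 \<noteq> v2" and w'1: "w' \<noteq> v1" and w'2: "w' \<noteq> v2" and wS: "w \<in> {v1,v2,w'}"
   and uSG: "u \<in> SG" and u'SG: "u' \<in> SG"
   and TG: "edge_disjoint_S_trees G SG L TG" and L1: "1 \<le> L" and lL: "l1 \<le> L"
   and R: "edge_disjoint_S_trees H {v1,v2,w'} l2 R"
   and ab: "\<And>j. j<L \<Longrightarrow> {u, a j} \<in> edges (TG j) \<and> {u', b j} \<in> edges (TG j) \<and> \<not>(a j = u' \<and> b j = u)"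
   and cR: "\<And>i. i<l2 \<Longrightarrow> {w', c i} \<in> edges (R i)"
   and f: "bij_betw f {..<n} (verts H)"
begin

lemma TGj:
  assumes "j < L"
  shows "graph (TG j)" "edges (TG j) \<subseteq> edges G" "verts (TG j) \<subseteq> verts G" "SG \<subseteq> verts (TG j)"
    "connected (TG j)"
  using TG assms unfolding edge_disjoint_S_trees_def S_tree_def subgraph_def is_tree_def by auto

lemma TGdisj: "j < L \<Longrightarrow> j' < L \<Longrightarrow> j \<noteq> j' \<Longrightarrow> e \<in> edges (TG j) \<Longrightarrow> e \<in> edges (TG j') \<Longrightarrow> False"
  using TG unfolding edge_disjoint_S_trees_def by blast

lemma Ri:
  assumes "i < l2"
  shows "graph (R i)" "edges (R i) \<subseteq> edges H" "verts (R i) \<subseteq> verts H" "{v1,v2,w'} \<subseteq> verts (R i)"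
    "connected (R i)"
  using R assms unfolding edge_disjoint_S_trees_def S_tree_def subgraph_def is_tree_def by auto

lemma Rdisj: "i < l2 \<Longrightarrow> i' < l2 \<Longrightarrow> i \<noteq> i' \<Longrightarrow> e \<in> edges (R i) \<Longrightarrow> e \<in> edges (R i') \<Longrightarrow> False"
  using R unfolding edge_disjoint_S_trees_def by blast

lemma edge_TG: "j < L \<Longrightarrow> {p,q} \<in> edges (TG j) \<Longrightarrow> p \<noteq> q \<and> p \<in> verts G \<and> q \<in> verts G"
  using graph_edge[OF TGj(1), of j p q] TGj(3)[of j] by auto

lemma edge_R: "i < l2 \<Longrightarrow> {p,q} \<in> edges (R i) \<Longrightarrow> p \<noteq> q \<and> p \<in> verts (R i) \<and> q \<in> verts (R i) \<and> p \<in> verts H \<and> q \<in> verts H"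
  using graph_edge[OF Ri(1), of i p q] Ri(3)[of i] by auto

lemma ab': assumes "j < L" shows "a j \<noteq> u" "b j \<noteq> u'" "a j \<in> verts G" "b j \<in> verts G"
  using ab[OF assms] edge_TG[OF assms, of u "a j"] edge_TG[OF assms, of u' "b j"] by auto

lemma c': assumes "i < l2" shows "c i \<noteq> w'" "c i \<in> verts H" "c i \<in> verts (R i)"
  using cR[OF assms] edge_R[OF assms, of w' "c i"] by auto

definition Acp where "Acp j h = {{(p,h),(q,h)} | p q. {p,q} \<in> edges (TG j)}"
definition Aat where "Aat j h = {{(u,v1),(a j,h)}, {(u,v2),(a j,h)}, {(u',w),(b j,h)}}"
definition EA where "EA j h = Acp j h \<union> Aat j h"
definition A0 where "A0 = (\<Union>h\<in>verts H. EA 0 h)"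
definition Blay where "Blay i = {{(p,g),(p,d)} | p g d. p \<in> verts G \<and> {g,d} \<in> edges (R i)}"
definition Bcr where "Bcr i = {{(p,g),(q,d)} | p q g d. {p,q} \<in> edges (TG 0) \<and> ((g = w' \<and> d = c i) \<or> (g = c i \<and> d = w'))} - A0"
definition EB where "EB i = Blay i \<union> Bcr i"

lemma EA_sub: assumes "j < L" "h \<in> verts H" shows "EA j h \<subseteq> edges (lex_prod G H)"
proof
  fix e assume "e \<in> EA j h"
  then consider (cp) p q where "e = {(p,h),(q,h)}" "{p,q} \<in> edges (TG j)"
    | (at) "e \<in> Aat j h" unfolding EA_def Acp_def by auto
  thus "e \<in> edges (lex_prod G H)"
  proof cases
    case cp
    have "p \<in> verts G" "q \<in> verts G" using edge_TG[OF assms(1) cp(2)] by auto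
    moreover have "{p,q} \<in> edges G" using cp(2) TGj(2)[OF assms(1)] by blast
    ultimately show ?thesis unfolding cp(1) using assms(2) by (intro lex_edge_G)
  next
    case at
    have "{u, a j} \<in> edges G" "{u', b j} \<in> edges G" using ab[OF assms(1)] TGj(2)[OF assms(1)] by auto
    have "{(u,v1),(a j,h)} \<in> edges (lex_prod G H)" "{(u,v2),(a j,h)} \<in> edges (lex_prod G H)"
      "{(u',w),(b j,h)} \<in> edges (lex_prod G H)"
      using ab'[OF assms(1)] uG u'G v1H v2H wH assms(2) \<open>{u, a j} \<in> edges G\<close> \<open>{u', b j} \<in> edges G\<close>
      by (intro lex_edge_G; simp)+
    thus ?thesis using at unfolding Aat_def by blast
  qed
qed

lemma EB_sub: assumes "i < l2" shows "EB i \<subseteq> edges (lex_prod G H)"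
proof
  fix e assume "e \<in> EB i"
  then consider (ly) p g d where "e = {(p,g),(p,d)}" "p \<in> verts G" "{g,d} \<in> edges (R i)"
    | (cr) p q g d where "e = {(p,g),(q,d)}" "{p,q} \<in> edges (TG 0)" "(g = w' \<and> d = c i) \<or> (g = c i \<and> d = w')"
    unfolding EB_def Blay_def Bcr_def by blast
  thus "e \<in> edges (lex_prod G H)"
  proof cases
    case ly
    have "g \<in> verts H" "d \<in> verts H" using edge_R[OF assms ly(3)] by auto
    moreover have "{g,d} \<in> edges H" using ly(3) Ri(2)[OF assms] by blast
    ultimately show ?thesis unfolding ly(1) using ly(2) by (intro lex_edge_H)
  next
    case cr
    have "{p,q} \<in> edges G" using cr TGj(2)[of 0] L1 by auto
    moreover have "p \<in> verts G" "q \<in> verts G" using edge_TG[of 0 p q] L1 cr(2) by auto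
    moreover have "g \<in> verts H" "d \<in> verts H" using cr(3) c'[OF assms] w'H by auto
    ultimately show ?thesis unfolding cr(1) by (intro lex_edge_G)
  qed
qed

end


context cons begin

lemma TG_uu': "j < L \<Longrightarrow> (adj (TG j))\<^sup>*\<^sup>* u u'"
  using TGj(4,5)[of j] uSG u'SG unfolding connected_def by blast

lemma A_copy: "{p,q} \<in> edges (TG j) \<Longrightarrow> conn (EA j h) (p,h) (q,h)"
  unfolding conn_def EA_def Acp_def by blast

lemma A_lift:
  assumes "(adj (TG j))\<^sup>*\<^sup>* p q" shows "(conn (EA j h))\<^sup>*\<^sup>* (p,h) (q,h)"
proof -
  have "(conn (EA j h))\<^sup>*\<^sup>* ((\<lambda>p. (p,h)) p) ((\<lambda>p. (p,h)) q)"
    using assms by (rule rtc_lift) (unfold adj_def, rule r_into_rtranclp, erule A_copy)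
  thus ?thesis by simp
qed

lemma A_conn:
  assumes j: "j < L"
  shows "(conn (EA j h))\<^sup>*\<^sup>* (u,v1) (u,v2)" "(conn (EA j h))\<^sup>*\<^sup>* (u,v1) (u',w)"
proof -
  let ?C = "conn (EA j h)"
  have c1: "?C (u,v1) (a j,h)" "?C (u,v2) (a j,h)" "?C (u',w) (b j,h)"
    unfolding conn_def EA_def Aat_def by auto
  have "{a j, u} \<in> edges (TG j)" using ab[OF j] by (simp add: insert_commute)
  hence c4: "?C (a j,h) (u,h)" by (rule A_copy)
  have c5: "?C (u',h) (b j,h)" using ab[OF j] by (intro A_copy) simp
  have m: "?C\<^sup>*\<^sup>* (u,h) (u',h)" using A_lift[OF TG_uu'[OF j]] .
  have "?C\<^sup>*\<^sup>* (a j,h) (u',w)"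
  proof -
    have "?C\<^sup>*\<^sup>* (a j,h) (u',h)" using c4 m by (rule converse_rtranclp_into_rtranclp)
    hence "?C\<^sup>*\<^sup>* (a j,h) (b j,h)" using c5 by (rule rtranclp.rtrancl_into_rtrancl)
    thus ?thesis using conn_sym[THEN iffD1, OF c1(3)] by (rule rtranclp.rtrancl_into_rtrancl)
  qed
  thus "?C\<^sup>*\<^sup>* (u,v1) (u',w)" using c1(1) by (rule converse_rtranclp_into_rtranclp[rotated])
  have "?C\<^sup>*\<^sup>* (a j,h) (u,v2)" using conn_sym[THEN iffD1, OF c1(2)] by simp
  thus "?C\<^sup>*\<^sup>* (u,v1) (u,v2)" using c1(1) by (rule converse_rtranclp_into_rtranclp[rotated])
qed

lemma B_layer:
  assumes i: "i < l2" and p: "p \<in> verts G" and g: "g \<in> verts (R i)" and d: "d \<in> verts (R i)"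
  shows "(conn (EB i))\<^sup>*\<^sup>* (p,g) (p,d)"
proof -
  have "(adj (R i))\<^sup>*\<^sup>* g d" using Ri(5)[OF i] g d unfolding connected_def by blast
  hence "(conn (EB i))\<^sup>*\<^sup>* ((\<lambda>g. (p,g)) g) ((\<lambda>g. (p,g)) d)"
  proof (rule rtc_lift)
    fix x y assume "adj (R i) x y"
    hence "conn (EB i) (p,x) (p,y)" using p unfolding adj_def conn_def EB_def Blay_def by blast
    thus "(conn (EB i))\<^sup>*\<^sup>* ((\<lambda>g. (p,g)) x) ((\<lambda>g. (p,g)) y)" by simp
  qed
  thus ?thesis by simp
qed

lemma at_form:
  assumes cw: "cc \<noteq> w'" and e: "{(p,w'),(q,cc)} \<in> EA 0 h"
  shows "(q = u \<and> cc \<in> {v1,v2} \<and> p = a 0) \<or> (p = u' \<and> w' = w \<and> q = b 0) \<or> (q = u' \<and> cc = w \<and> p = b 0)"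
proof -
  have "{(p,w'),(q,cc)} \<notin> Acp 0 h"
  proof
    assume "{(p,w'),(q,cc)} \<in> Acp 0 h"
    then obtain p' q' where "{(p,w'),(q,cc)} = {(p',h),(q',h)}" unfolding Acp_def by blast
    hence "{w',cc} = {h,h}" by (rule pair_doubleton_eq[THEN conjunct2])
    thus False using cw by (auto simp: doubleton_eq_iff)
  qed
  hence "{(p,w'),(q,cc)} \<in> Aat 0 h" using e unfolding EA_def by blast
  hence "{(p,w'),(q,cc)} = {(u,v1),(a 0,h)} \<or> {(p,w'),(q,cc)} = {(u,v2),(a 0,h)} \<or> {(p,w'),(q,cc)} = {(u',w),(b 0,h)}"
    unfolding Aat_def by (simp only: insert_iff empty_iff simp_thms)
  thus ?thesis using w'1 w'2 unfolding doubleton_eq_iff prod.inject by blast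
qed

lemma B_cross:
  assumes i: "i < l2" and pq: "{p,q} \<in> edges (TG 0)"
  shows "(conn (EB i))\<^sup>*\<^sup>* (p,w') (q,w')"
proof -
  have L0: "0 < L" using L1 by simp
  have pqv: "p \<noteq> q" "p \<in> verts G" "q \<in> verts G" using edge_TG[OF L0 pq] by auto
  have ci: "c i \<noteq> w'" "c i \<in> verts (R i)" using c'[OF i] by auto
  have w'R: "w' \<in> verts (R i)" using Ri(4)[OF i] by auto
  have ab0: "a 0 \<noteq> u" "b 0 \<noteq> u'" "\<not> (a 0 = u' \<and> b 0 = u)" using ab'[OF L0] ab[OF L0] by auto
  let ?e1 = "{(p,w'),(q,c i)}" and ?e2 = "{(q,w'),(p,c i)}"
  have notboth: "\<not> (?e1 \<in> A0 \<and> ?e2 \<in> A0)"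
  proof
    assume "?e1 \<in> A0 \<and> ?e2 \<in> A0"
    then obtain h1 h2 where "?e1 \<in> EA 0 h1" "?e2 \<in> EA 0 h2" unfolding A0_def by blast
    from at_form[OF ci(1) this(1)] at_form[OF ci(1) this(2)]
    show False using pqv(1) ab0 uu ci(1) by blast
  qed
  have in1: "?e1 \<in> A0 \<or> ?e1 \<in> Bcr i" unfolding Bcr_def using pq by blast
  have in2: "?e2 \<in> A0 \<or> ?e2 \<in> Bcr i" unfolding Bcr_def using pq by (auto simp: insert_commute)
  show ?thesis
  proof (cases "?e1 \<in> A0")
    case False
    hence "conn (EB i) (p,w') (q,c i)" using in1 unfolding conn_def EB_def by blast
    moreover have "(conn (EB i))\<^sup>*\<^sup>* (q,c i) (q,w')" using B_layer[OF i pqv(3) ci(2) w'R] .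
    ultimately show ?thesis by (rule converse_rtranclp_into_rtranclp)
  next
    case True
    hence "?e2 \<notin> A0" using notboth by blast
    hence "conn (EB i) (p,c i) (q,w')" using in2 unfolding conn_def EB_def by (auto simp: insert_commute)
    moreover have "(conn (EB i))\<^sup>*\<^sup>* (p,w') (p,c i)" using B_layer[OF i pqv(2) w'R ci(2)] .
    ultimately show ?thesis by (rule rtranclp.rtrancl_into_rtrancl[rotated])
  qed
qed

lemma B_conn:
  assumes i: "i < l2"
  shows "(conn (EB i))\<^sup>*\<^sup>* (u,v1) (u,v2)" "(conn (EB i))\<^sup>*\<^sup>* (u,v1) (u',w)"
proof -
  have vR: "v1 \<in> verts (R i)" "v2 \<in> verts (R i)" "w' \<in> verts (R i)" "w \<in> verts (R i)"
    using Ri(4)[OF i] wS by auto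
  show "(conn (EB i))\<^sup>*\<^sup>* (u,v1) (u,v2)" using B_layer[OF i uG vR(1,2)] .
  have uu0: "(adj (TG 0))\<^sup>*\<^sup>* u u'" using TG_uu'[of 0] L1 by simp
  have "(conn (EB i))\<^sup>*\<^sup>* ((\<lambda>p. (p,w')) u) ((\<lambda>p. (p,w')) u')"
    using uu0
  proof (rule rtc_lift)
    fix p q assume "adj (TG 0) p q"
    hence "{p,q} \<in> edges (TG 0)" by (simp add: adj_def)
    thus "(conn (EB i))\<^sup>*\<^sup>* ((\<lambda>p. (p,w')) p) ((\<lambda>p. (p,w')) q)" using B_cross[OF i] by simp
  qed
  hence "(conn (EB i))\<^sup>*\<^sup>* (u,w') (u',w')" by simp
  hence "(conn (EB i))\<^sup>*\<^sup>* (u,v1) (u',w')" using B_layer[OF i uG vR(1,3)] by (rule rtranclp_trans[rotated])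
  thus "(conn (EB i))\<^sup>*\<^sup>* (u,v1) (u',w)" using B_layer[OF i u'G vR(3,4)] by (rule rtranclp_trans)
qed

end


context cons begin

lemma EA_proj:
  assumes j: "j < L" and e: "e \<in> EA j h"
  shows "\<exists>p q s r. e = {(p,s),(q,r)} \<and> {p,q} \<in> edges (TG j)"
proof -
  have "e \<in> Acp j h \<or> e \<in> Aat j h" using e unfolding EA_def by blast
  thus ?thesis
  proof
    assume "e \<in> Acp j h" thus ?thesis unfolding Acp_def by blast
  next
    assume "e \<in> Aat j h"
    hence "e = {(u,v1),(a j,h)} \<or> e = {(u,v2),(a j,h)} \<or> e = {(u',w),(b j,h)}"
      unfolding Aat_def by (simp only: insert_iff empty_iff simp_thms)
    thus ?thesis using ab[OF j] by blast
  qed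
qed

lemma EB_cases:
  assumes "e \<in> EB i"
  shows "(\<exists>p g d. e = {(p,g),(p,d)} \<and> {g,d} \<in> edges (R i)) \<or>
         (\<exists>p q g d. e = {(p,g),(q,d)} \<and> {p,q} \<in> edges (TG 0) \<and> {g,d} = {w', c i} \<and> e \<notin> A0)"
proof -
  have "e \<in> Blay i \<or> e \<in> Bcr i" using assms unfolding EB_def by blast
  thus ?thesis
  proof
    assume "e \<in> Blay i" thus ?thesis unfolding Blay_def by blast
  next
    assume "e \<in> Bcr i"
    then obtain p q g d where "e = {(p,g),(q,d)}" "{p,q} \<in> edges (TG 0)"
      "(g = w' \<and> d = c i) \<or> (g = c i \<and> d = w')" "e \<notin> A0"
      unfolding Bcr_def by blast
    moreover have "{g,d} = {w', c i}" using calculation(3) by (auto simp: insert_commute)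
    ultimately show ?thesis by blast
  qed
qed

lemma AA_disj:
  assumes j: "j < L" "j' < L" and h: "(j,h) \<noteq> (j',h')"
    and e: "e \<in> EA j h" "e \<in> EA j' h'"
  shows False
proof (cases "j = j'")
  case False
  obtain p q s r where 1: "e = {(p,s),(q,r)}" "{p,q} \<in> edges (TG j)" using EA_proj[OF j(1) e(1)] by blast
  obtain p' q' s' r' where 2: "e = {(p',s'),(q',r')}" "{p',q'} \<in> edges (TG j')" using EA_proj[OF j(2) e(2)] by blast
  have "{p,q} = {p',q'}" using 1(1) 2(1) pair_doubleton_eq by metis
  thus False using TGdisj[OF j False 1(2)] 2(2) by simp
next
  case True
  hence hh: "h \<noteq> h'" using h by simp
  have abj: "a j \<noteq> u" "b j \<noteq> u'" "\<not> (a j = u' \<and> b j = u)" using ab'[OF j(1)] ab[OF j(1)] by auto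
  have snd_h: "\<exists>X r. e = {X, (r,h)}" if "e \<in> EA j h" for h
  proof -
    have "e \<in> Acp j h \<or> e \<in> Aat j h" using that unfolding EA_def by blast
    thus ?thesis
    proof
      assume "e \<in> Acp j h" thus ?thesis unfolding Acp_def by blast
    next
      assume "e \<in> Aat j h"
      hence "e = {(u,v1),(a j,h)} \<or> e = {(u,v2),(a j,h)} \<or> e = {(u',w),(b j,h)}"
        unfolding Aat_def by (simp only: insert_iff empty_iff simp_thms)
      thus ?thesis by blast
    qed
  qed
  show False
  proof (cases "e \<in> Acp j h")
    case True
    then obtain p q where pq: "e = {(p,h),(q,h)}" unfolding Acp_def by blast
    have "e \<in> EA j h'" using e(2) \<open>j = j'\<close> by simp
    then obtain X r where "e = {X, (r,h')}" using snd_h by blast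
    hence "{(p,h),(q,h)} = {(fst X, snd X), (r,h')}" using pq by simp
    hence "{h,h} = {snd X, h'}" by (rule pair_doubleton_eq[THEN conjunct2])
    thus False using hh by (auto simp: doubleton_eq_iff)
  next
    case False
    hence at1: "e \<in> Aat j h" using e(1) unfolding EA_def by blast
    show False
    proof (cases "e \<in> Acp j h'")
      case True
      then obtain p q where pq: "e = {(p,h'),(q,h')}" unfolding Acp_def by blast
      obtain X r where "e = {X, (r,h)}" using snd_h e(1) by blast
      hence "{(p,h'),(q,h')} = {(fst X, snd X), (r,h)}" using pq by simp
      hence "{h',h'} = {snd X, h}" by (rule pair_doubleton_eq[THEN conjunct2])
      thus False using hh by (auto simp: doubleton_eq_iff)
    next
      case False
      hence at2: "e \<in> Aat j h'" using e(2) \<open>j = j'\<close> unfolding EA_def by blast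
      have d1: "e = {(u,v1),(a j,h)} \<or> e = {(u,v2),(a j,h)} \<or> e = {(u',w),(b j,h)}"
        using at1 unfolding Aat_def by (simp only: insert_iff empty_iff simp_thms)
      have d2: "e = {(u,v1),(a j,h')} \<or> e = {(u,v2),(a j,h')} \<or> e = {(u',w),(b j,h')}"
        using at2 unfolding Aat_def by (simp only: insert_iff empty_iff simp_thms)
      from d1 d2 have "{(u,v1),(a j,h)} = {(u,v1),(a j,h')} \<or> {(u,v1),(a j,h)} = {(u,v2),(a j,h')} \<or>
          {(u,v1),(a j,h)} = {(u',w),(b j,h')} \<or>
          {(u,v2),(a j,h)} = {(u,v1),(a j,h')} \<or> {(u,v2),(a j,h)} = {(u,v2),(a j,h')} \<or>
          {(u,v2),(a j,h)} = {(u',w),(b j,h')} \<or>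
          {(u',w),(b j,h)} = {(u,v1),(a j,h')} \<or> {(u',w),(b j,h)} = {(u,v2),(a j,h')} \<or>
          {(u',w),(b j,h)} = {(u',w),(b j,h')}"
        by metis
      thus False using abj hh uu unfolding doubleton_eq_iff prod.inject by blast
    qed
  qed
qed

lemma BB_disj:
  assumes i: "i < l2" "i' < l2" "i \<noteq> i'" and e: "e \<in> EB i" "e \<in> EB i'"
  shows False
proof -
  have L0: "0 < L" using L1 by simp
  have nl: False if "{(p,g),(p,d)} = {(p',g'),(q',d')}" "{p',q'} \<in> edges (TG 0)" for p g d p' g' q' d'
  proof -
    have "{p,p} = {p',q'}" using that(1) by (rule pair_doubleton_eq[THEN conjunct1])
    hence "p' = q'" by (auto simp: doubleton_eq_iff)
    thus False using edge_TG[OF L0 that(2)] by simp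
  qed
  from EB_cases[OF e(1)] EB_cases[OF e(2)] show False
  proof (elim disjE exE conjE)
    fix p g d p' g' d' assume "e = {(p,g),(p,d)}" "{g,d} \<in> edges (R i)" "e = {(p',g'),(p',d')}" "{g',d'} \<in> edges (R i')"
    moreover have "{g,d} = {g',d'}" using calculation(1,3) pair_doubleton_eq by metis
    ultimately show False using Rdisj[OF i] by metis
  next
    fix p g d p' q' g' d' assume "e = {(p,g),(p,d)}" "e = {(p',g'),(q',d')}" "{p',q'} \<in> edges (TG 0)"
    thus False using nl by metis
  next
    fix p g d p' q' g' d' assume "e = {(p,g),(p,d)}" "e = {(p',g'),(q',d')}" "{p',q'} \<in> edges (TG 0)"
    thus False using nl by metis
  next
    fix p q g d p' q' g' d'
    assume "e = {(p,g),(q,d)}" "{g,d} = {w', c i}" "e = {(p',g'),(q',d')}" "{g',d'} = {w', c i'}"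
    hence "{w', c i} = {w', c i'}" using pair_doubleton_eq by metis
    hence "c i = c i'" using c'(1)[OF i(1)] c'(1)[OF i(2)] by (auto simp: doubleton_eq_iff)
    thus False using cR[OF i(1)] cR[OF i(2)] Rdisj[OF i] by metis
  qed
qed

lemma AB_disj:
  assumes j: "j < L" and h: "h \<in> verts H" and i: "i < l2" and e: "e \<in> EA j h" "e \<in> EB i"
  shows False
proof -
  have L0: "0 < L" using L1 by simp
  obtain p q s r where 1: "e = {(p,s),(q,r)}" "{p,q} \<in> edges (TG j)" using EA_proj[OF j e(1)] by blast
  have pq: "p \<noteq> q" using edge_TG[OF j 1(2)] by simp
  from EB_cases[OF e(2)] show False
  proof (elim disjE exE conjE)
    fix p' g d assume "e = {(p',g),(p',d)}"
    hence "{p,q} = {p',p'}" using 1(1) pair_doubleton_eq by metis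
    thus False using pq by (auto simp: doubleton_eq_iff)
  next
    fix p' q' g d assume 2: "e = {(p',g),(q',d)}" "{p',q'} \<in> edges (TG 0)" "e \<notin> A0"
    hence pp: "{p,q} = {p',q'}" using 1(1) pair_doubleton_eq by metis
    show False
    proof (cases "j = 0")
      case True thus False using 2(3) e(1) h unfolding A0_def by blast
    next
      case False thus False using TGdisj[OF j L0 False 1(2)] 2(2) pp by simp
    qed
  qed
qed

end


context cons begin

definition EF where "EF k = (if k < l2 then EB k else EA ((k-l2) div n) (f ((k-l2) mod n)))"

lemma idx:
  assumes "k < l2 + l1 * n" "\<not> k < l2"
  shows "(k-l2) div n < l1" "(k-l2) mod n < n" "f ((k-l2) mod n) \<in> verts H" "(k-l2) div n < L"
proof -
  have m: "k - l2 < l1 * n" using assms by simp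
  hence n0: "0 < n" by (cases n) auto
  show 1: "(k-l2) div n < l1" using m by (simp add: less_mult_imp_div_less)
  show 2: "(k-l2) mod n < n" using n0 by simp
  show "f ((k-l2) mod n) \<in> verts H" using f 2 unfolding bij_betw_def by auto
  show "(k-l2) div n < L" using 1 lL by simp
qed

lemma EF_sub: "k < l2 + l1 * n \<Longrightarrow> EF k \<subseteq> edges (lex_prod G H)"
  unfolding EF_def using EB_sub EA_sub idx by auto

lemma EF_conn:
  assumes "k < l2 + l1 * n"
  shows "(conn (EF k))\<^sup>*\<^sup>* (u,v1) (u,v2)" "(conn (EF k))\<^sup>*\<^sup>* (u,v1) (u',w)"
  using assms B_conn A_conn idx unfolding EF_def by auto

lemma EF_disj:
  assumes k: "k < l2 + l1 * n" "k' < l2 + l1 * n" "k \<noteq> k'" and e: "e \<in> EF k" "e \<in> EF k'"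
  shows False
proof (cases "k < l2")
  case True note kk = True
  show False
  proof (cases "k' < l2")
    case True thus False using BB_disj[OF kk True k(3)] e unfolding EF_def using kk by simp
  next
    case False thus False using AB_disj[OF idx(4)[OF k(2) False] idx(3)[OF k(2) False] kk] e
      unfolding EF_def using kk by simp
  qed
next
  case False note kk = False
  show False
  proof (cases "k' < l2")
    case True thus False using AB_disj[OF idx(4)[OF k(1) kk] idx(3)[OF k(1) kk] True] e
      unfolding EF_def using kk by simp
  next
    case False
    have ne: "((k-l2) div n, f ((k-l2) mod n)) \<noteq> ((k'-l2) div n, f ((k'-l2) mod n))"
    proof
      assume eq: "((k-l2) div n, f ((k-l2) mod n)) = ((k'-l2) div n, f ((k'-l2) mod n))"
      have "inj_on f {..<n}" using f by (rule bij_betw_imp_inj_on)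
      hence "(k-l2) mod n = (k'-l2) mod n" using eq idx(2)[OF k(1) kk] idx(2)[OF k(2) False]
        unfolding inj_on_def by auto
      moreover have "(k-l2) div n = (k'-l2) div n" using eq by simp
      ultimately have "k - l2 = k' - l2" by (metis div_mod_decomp)
      thus False using kk False k(3) by simp
    qed
    show False using AA_disj[OF idx(4)[OF k(1) kk] idx(4)[OF k(2) False] ne] e
      unfolding EF_def using kk False by simp
  qed
qed

lemma final:
  "\<exists>T. edge_disjoint_S_trees (lex_prod G H) {(u,v1),(u,v2),(u',w)} (l2 + l1 * n) T"
proof -
  let ?P = "lex_prod G H" and ?S = "{(u,v1),(u,v2),(u',w)}"
  have gP: "graph ?P" using lex_graph[OF G H] .
  have SP: "?S \<subseteq> verts ?P" using uG u'G v1H v2H wH by (simp add: lex_verts)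
  have "\<forall>k. \<exists>T. k < l2 + l1 * n \<longrightarrow> S_tree ?P ?S T \<and> edges T \<subseteq> EF k"
  proof (intro allI)
    fix k
    show "\<exists>T. k < l2 + l1 * n \<longrightarrow> S_tree ?P ?S T \<and> edges T \<subseteq> EF k"
    proof (cases "k < l2 + l1 * n")
      case True
      have "\<forall>s\<in>?S. (conn (EF k))\<^sup>*\<^sup>* (u,v1) s" using EF_conn[OF True] by auto
      hence "\<exists>T. S_tree ?P ?S T \<and> edges T \<subseteq> EF k"
        using tree_exists[OF gP EF_sub[OF True] SP] by blast
      thus ?thesis by blast
    qed simp
  qed
  then obtain T where T: "\<And>k. k < l2 + l1 * n \<Longrightarrow> S_tree ?P ?S (T k) \<and> edges (T k) \<subseteq> EF k"
    by metis
  have "edge_disjoint_S_trees ?P ?S (l2 + l1 * n) T"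
    unfolding edge_disjoint_S_trees_def
  proof (intro conjI allI impI)
    fix i assume "i < l2 + l1 * n" thus "S_tree ?P ?S (T i)" using T by blast
  next
    fix i j assume ij: "i < l2 + l1 * n" "j < l2 + l1 * n" "i \<noteq> j"
    show "edges (T i) \<inter> edges (T j) = {}"
    proof (rule ccontr)
      assume "edges (T i) \<inter> edges (T j) \<noteq> {}"
      then obtain e where "e \<in> edges (T i)" "e \<in> edges (T j)" by blast
      hence "e \<in> EF i" "e \<in> EF j" using T ij by blast+
      thus False using EF_disj[OF ij] by blast
    qed
  qed
  thus ?thesis by blast
qed

end


theorem lemma3p2:
  fixes G :: "'a graph" and H :: "'b graph" and x y z :: "'a \<times> 'b"
  assumes "graph G" and "graph H"
    and "connected G" and "connected H"
    and "card (verts G) \<ge> 3" and "card (verts H) \<ge> 3"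
    and "x \<in> verts (lex_prod G H)" and "y \<in> verts (lex_prod G H)"
    and "z \<in> verts (lex_prod G H)"
    and "x \<noteq> y"
    and "fst x = fst y" and "fst z \<noteq> fst x"
  shows "\<exists>T. edge_disjoint_S_trees (lex_prod G H) {x, y, z}
              (lambda3 H + lambda3 G * card (verts H)) T"
proof -
  note G = assms(1) and H = assms(2)
  obtain u v1 where x: "x = (u,v1)" by (cases x)
  obtain v2 where y: "y = (u,v2)" using assms(11) x by (cases y) auto
  obtain u' w where z: "z = (u',w)" by (cases z)
  have uG: "u \<in> verts G" and v1H: "v1 \<in> verts H" using assms(7) x by (auto simp: lex_verts)
  have v2H: "v2 \<in> verts H" using assms(8) y by (auto simp: lex_verts)
  have u'G: "u' \<in> verts G" and wH: "w \<in> verts H" using assms(9) z by (auto simp: lex_verts)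
  have v12: "v1 \<noteq> v2" using assms(10) x y by auto
  have uu: "u \<noteq> u'" using assms(12) x z by auto
  have finG: "finite (verts G)" and finH: "finite (verts H)" using G H by (auto simp: graph_def)
  obtain t where t: "t \<in> verts G" "t \<noteq> u" "t \<noteq> u'" using third_elem[OF finG assms(5)] by blast
  obtain w' where w': "w' \<in> verts H" "w' \<noteq> v1" "w' \<noteq> v2" "w \<in> {v1,v2,w'}"
  proof (cases "w \<in> {v1,v2}")
    case True
    obtain t' where "t' \<in> verts H" "t' \<noteq> v1" "t' \<noteq> v2" using third_elem[OF finH assms(6)] by blast
    thus ?thesis using that True by blast
  next
    case False thus ?thesis using that wH by blast
  qed
  define SG where "SG = {u,u',t}"
  define SH where "SH = {v1,v2,w'}"
  have SGv: "SG \<subseteq> verts G" "card SG = 3" using uG u'G t uu by (auto simp: SG_def)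
  have SHv: "SH \<subseteq> verts H" "card SH = 3" using v1H v2H w' v12 by (auto simp: SH_def)
  define LG where "LG = lambdaS G SG"
  obtain TG where TG: "edge_disjoint_S_trees G SG LG TG"
    using lambdaS_props(1)[OF G, of u SG u'] uu by (auto simp: SG_def LG_def)
  have L1: "1 \<le> LG" unfolding LG_def using lambdaS_ge1[OF G assms(3) SGv(1), of u u'] uu by (simp add: SG_def)
  have lL: "lambda3 G \<le> LG" unfolding LG_def using lambda3_le[OF G SGv] .
  obtain R0 where R0: "edge_disjoint_S_trees H SH (lambdaS H SH) R0"
    using lambdaS_props(1)[OF H, of v1 SH v2] v12 by (auto simp: SH_def)
  have "lambda3 H \<le> lambdaS H SH" using lambda3_le[OF H SHv] .
  hence R: "edge_disjoint_S_trees H SH (lambda3 H) R0" using eds_trunc[OF R0] by blast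
  have "\<forall>j. \<exists>p. j < LG \<longrightarrow> {u, fst p} \<in> edges (TG j) \<and> {u', snd p} \<in> edges (TG j) \<and> \<not> (fst p = u' \<and> snd p = u)"
  proof
    fix j show "\<exists>p. j < LG \<longrightarrow> {u, fst p} \<in> edges (TG j) \<and> {u', snd p} \<in> edges (TG j) \<and> \<not> (fst p = u' \<and> snd p = u)"
    proof (cases "j < LG")
      case True
      have "connected (TG j)" "SG \<subseteq> verts (TG j)"
        using TG True unfolding edge_disjoint_S_trees_def S_tree_def is_tree_def by auto
      then obtain a b where "adj (TG j) u a" "adj (TG j) u' b" "\<not> (a = u' \<and> b = u)"
        using nbrs[of "TG j" u u' t] uu t by (auto simp: SG_def)
      thus ?thesis unfolding adj_def by (intro exI[of _ "(a,b)"]) auto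
    qed simp
  qed
  then obtain pab where pab: "\<And>j. j < LG \<Longrightarrow> {u, fst (pab j)} \<in> edges (TG j) \<and> {u', snd (pab j)} \<in> edges (TG j) \<and> \<not> (fst (pab j) = u' \<and> snd (pab j) = u)"
    by metis
  have "\<forall>i. \<exists>c. i < lambda3 H \<longrightarrow> {w', c} \<in> edges (R0 i)"
  proof
    fix i show "\<exists>c. i < lambda3 H \<longrightarrow> {w', c} \<in> edges (R0 i)"
    proof (cases "i < lambda3 H")
      case True
      have "connected (R0 i)" "SH \<subseteq> verts (R0 i)"
        using R True unfolding edge_disjoint_S_trees_def S_tree_def is_tree_def by auto
      hence "(adj (R0 i))\<^sup>*\<^sup>* w' v1" unfolding connected_def SH_def by auto
      then obtain c where "adj (R0 i) w' c" using w'(2) by (metis converse_rtranclpE)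
      thus ?thesis unfolding adj_def by blast
    qed simp
  qed
  then obtain c where c: "\<And>i. i < lambda3 H \<Longrightarrow> {w', c i} \<in> edges (R0 i)" by metis
  obtain f where f: "bij_betw f {0..<card (verts H)} (verts H)" using ex_bij_betw_nat_finite[OF finH] by blast
  hence f': "bij_betw f {..<card (verts H)} (verts H)" by (simp add: atLeast0LessThan)
  have "cons G H u u' v1 v2 w w' LG (lambda3 G) (lambda3 H) (card (verts H)) TG R0
          (\<lambda>j. fst (pab j)) (\<lambda>j. snd (pab j)) c f SG"
    by (unfold_locales; (fact G H uG u'G uu v1H v2H wH v12 L1 lL f')?)
       (use w' TG R pab c in \<open>auto simp: SG_def SH_def\<close>)
  from cons.final[OF this] show ?thesis using x y z by simp
qed

end
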